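(* In the $q_n$ case with $n=2m$ even ($m\ge 2$), at every point of $\Sigma$ $$h_k^{-1}h_{k+1}\ \ge\ \big(km-\tfrac12 k^2\big)g_0\quad(1\le k\le m-1),\qquad h_m^{-2}\ \ge\ \tfrac12 m^2 g_0 .$$ Moreover, if any one of these inequalities is an equality at a single point of $\Sigma$, then $q_n\equiv 0$.
   Context: Let $\Sigma$ be a closed Riemann surface of genus $\ge 2$ with canonical bundle $K$; $z$ is a local holomorphic coordinate and $\Delta=\partial_z\partial_{\bar z}$. A Hermitian metric on $K^{-l}$ is written locally as $h\,dz^l d\bar z^l$ and identified with the positive local function $h$; inequalities between sections of the same bundle $(K\otimes\bar K)^s$ mean inequalities of local coefficient functions. $g_0$ is the hyperbolic (curvature $-1$) Hermitian metric on $K^{-1}$; locally $\Delta\log g_0=g_0$. For $q_n=q_n dz^n\in H^0(\Sigma,K^n)$, $|q_n|^2:=q_n\bar q_n$. $q_n$ case with $n=2m$: $E=\bigoplus_{k=1}^n K^{(n+1-2k)/2}$, Higgs field $\phi$ with $\phi_{k+1,k}=1$, $\phi_{1,n}=q_n$, other entries $0$. The unique determinant-one Hermitian metric solving $F^{\nabla^h}+[\phi,\phi^{*_h}]=0$ is $h=\mathrm{diag}(h_1,\dots,h_m,h_m^{-1},\dots,h_1^{-1})$, $h_k$ a Hermitian metric on $K^{(n+1-2k)/2}$, and the equation is equivalent to: $\Delta\log h_1+h_1^{-1}h_2-h_1^2|q_n|^2=0$; $\Delta\log h_k+h_k^{-1}h_{k+1}-h_{k-1}^{-1}h_k=0$ for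 $2\le k\le m-1$; $\Delta\log h_m+h_m^{-2}-h_{m-1}^{-1}h_m=0$. *)

theory Defs
  imports "HOL-Analysis.Analysis"
begin

text \<open>Model: the closed Riemann surface of genus at least 2 is uniformized as the
quotient of the upper half plane by a cocompact, torsion-free Fuchsian group Gamma.
Sections of line bundles on Sigma are Gamma-equivariant functions on the upper half plane.\<close>

definition upper_half :: "complex set" where
  "upper_half = {z. Im z > 0}"

definition mob :: "real \<times> real \<times> real \<times> real \<Rightarrow> complex \<Rightarrow> complex" where
  "mob g z = (case g of (a,b,c,d) \<Rightarrow>
      (of_real a * z + of_real b) / (of_real c * z + of_real d))"

text \<open>The automorphy factor c z + d; note that mob g has derivative 1/(c z + d)^2.\<close>
definition jfac :: "real \<times> real \<times> real \<times> real \<Rightarrow> complex \<Rightarrow> complex" where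
  "jfac g z = (case g of (a,b,c,d) \<Rightarrow> of_real c * z + of_real d)"

definition mat_mult :: "real \<times> real \<times> real \<times> real \<Rightarrow> real \<times> real \<times> real \<times> real
    \<Rightarrow> real \<times> real \<times> real \<times> real" where
  "mat_mult g h = (case g of (a,b,c,d) \<Rightarrow> case h of (a',b',c',d') \<Rightarrow>
      (a*a' + b*c', a*b' + b*d', c*a' + d*c', c*b' + d*d'))"

definition mat_inv :: "real \<times> real \<times> real \<times> real \<Rightarrow> real \<times> real \<times> real \<times> real" where
  "mat_inv g = (case g of (a,b,c,d) \<Rightarrow> (d, -b, -c, a))"

text \<open>A cocompact, torsion-free (fixed-point free) discrete subgroup of SL(2,R);
the quotient of the upper half plane by it is a closed Riemann surface of genus at least 2,
and every such surface arises this way (uniformization).\<close>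
definition cocompact_fuchsian :: "(real \<times> real \<times> real \<times> real) set \<Rightarrow> bool" where
  "cocompact_fuchsian G \<longleftrightarrow>
     (\<forall>g\<in>G. case g of (a,b,c,d) \<Rightarrow> a*d - b*c = 1) \<and>
     (1,0,0,1) \<in> G \<and>
     (\<forall>g\<in>G. \<forall>h\<in>G. mat_mult g h \<in> G) \<and>
     (\<forall>g\<in>G. mat_inv g \<in> G) \<and>
     (\<forall>g\<in>G. \<forall>z\<in>upper_half. mob g z = z \<longrightarrow> g = (1,0,0,1) \<or> g = (-1,0,0,-1)) \<and>
     (\<forall>K. compact K \<and> K \<subseteq> upper_half \<longrightarrow> finite {g\<in>G. mob g ` K \<inter> K \<noteq> {}}) \<and>
     (\<exists>K. compact K \<and> K \<subseteq> upper_half \<and> (\<forall>z\<in>upper_half. \<exists>g\<in>G. mob g z \<in> K))"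

text \<open>Coefficient f of a smooth section f (dz dzbar)^s of (K \<otimes> Kbar)^s, s = e/2:
invariance f(gz) |(gz)'|^{2s} = f(z), i.e. f(gz) = |cz+d|^(2e) f(z).\<close>
definition equivariant_density :: "(real \<times> real \<times> real \<times> real) set \<Rightarrow> int \<Rightarrow> (complex \<Rightarrow> real) \<Rightarrow> bool" where
  "equivariant_density G e f \<longleftrightarrow>
     (\<forall>g\<in>G. \<forall>z\<in>upper_half. f (mob g z) = cmod (jfac g z) powr (2 * real_of_int e) * f z)"

text \<open>Holomorphic section q dz^n of K^n: q(gz) ((gz)')^n = q(z).\<close>
definition holo_diff :: "(real \<times> real \<times> real \<times> real) set \<Rightarrow> nat \<Rightarrow> (complex \<Rightarrow> complex) \<Rightarrow> bool" where
  "holo_diff G n q \<longleftrightarrow> q holomorphic_on upper_half \<and>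
     (\<forall>g\<in>G. \<forall>z\<in>upper_half. q (mob g z) = (jfac g z) ^ (2*n) * q z)"

text \<open>Real partial derivatives and the operator Delta = d_z d_zbar = (1/4)(d_xx + d_yy).\<close>
definition px :: "(complex \<Rightarrow> real) \<Rightarrow> complex \<Rightarrow> real" where
  "px f z = frechet_derivative f (at z) 1"

definition py :: "(complex \<Rightarrow> real) \<Rightarrow> complex \<Rightarrow> real" where
  "py f z = frechet_derivative f (at z) \<i>"

definition Lap :: "(complex \<Rightarrow> real) \<Rightarrow> complex \<Rightarrow> real" where
  "Lap f z = (px (px f) z + py (py f) z) / 4"

definition C2_on :: "complex set \<Rightarrow> (complex \<Rightarrow> real) \<Rightarrow> bool" where
  "C2_on S f \<longleftrightarrow>
     (\<forall>z\<in>S. f differentiable (at z) \<and> px f differentiable (at z) \<and> py f differentiable (at z)) \<and>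
     continuous_on S (px (px f)) \<and> continuous_on S (py (px f)) \<and>
     continuous_on S (px (py f)) \<and> continuous_on S (py (py f))"

text \<open>The hyperbolic (curvature -1) metric g0 dz dzbar in the normalization Delta log g0 = g0.\<close>
definition g0 :: "complex \<Rightarrow> real" where
  "g0 z = 1 / (2 * (Im z)^2)"

end

theory Submission
  imports Defs
begin


definition C2p :: "complex set \<Rightarrow> (complex \<Rightarrow> real) \<Rightarrow> bool" where
  "C2p S f \<longleftrightarrow> open S \<and> (\<forall>z\<in>S. f differentiable (at z) \<and> px f differentiable (at z) \<and> py f differentiable (at z))"

lemma fd_cong:
  assumes "open S" "z \<in> S" "\<And>w. w \<in> S \<Longrightarrow> f w = g w"
  shows "frechet_derivative f (at z) = frechet_derivative g (at z)"
proof -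
  have "\<And>F. (f has_derivative F) (at z) \<longleftrightarrow> (g has_derivative F) (at z)"
    using has_derivative_transform_within_open[OF _ assms(1,2)] assms(3) by metis
  then show ?thesis unfolding frechet_derivative_def by simp
qed

lemma diff_cong:
  assumes "open S" "z \<in> S" "\<And>w. w \<in> S \<Longrightarrow> f w = g w" "f differentiable (at z)"
  shows "g differentiable (at z)"
  using has_derivative_transform_within_open[OF _ assms(1,2)] assms(3,4)
  unfolding differentiable_def by metis

lemma px_cong:
  assumes "open S" "z \<in> S" "\<And>w. w \<in> S \<Longrightarrow> f w = g w"
  shows "px f z = px g z" "py f z = py g z"
  unfolding px_def py_def using fd_cong[OF assms] by auto

lemma Lap_cong:
  assumes "open S" "z \<in> S" "\<And>w. w \<in> S \<Longrightarrow> f w = g w"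
  shows "Lap f z = Lap g z"
proof -
  have "\<And>w. w \<in> S \<Longrightarrow> px f w = px g w" "\<And>w. w \<in> S \<Longrightarrow> py f w = py g w"
    using px_cong[OF assms(1) _ assms(3)] by auto
  then show ?thesis unfolding Lap_def using px_cong[OF assms(1,2)] by metis
qed

lemma C2p_cong:
  assumes "C2p S f" "\<And>w. w \<in> S \<Longrightarrow> f w = g w"
  shows "C2p S g"
proof -
  have o: "open S" using assms(1) C2p_def by auto
  have "\<And>w. w \<in> S \<Longrightarrow> px f w = px g w" "\<And>w. w \<in> S \<Longrightarrow> py f w = py g w"
    using px_cong[OF o _ assms(2)] by auto
  then show ?thesis using assms o diff_cong[OF o] unfolding C2p_def by metis
qed

lemma px_at: "(f has_derivative F) (at z) \<Longrightarrow> px f z = F 1"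
  unfolding px_def using frechet_derivative_at by metis
lemma py_at: "(f has_derivative F) (at z) \<Longrightarrow> py f z = F \<i>"
  unfolding py_def using frechet_derivative_at by metis

lemma fd_works: "f differentiable (at z) \<Longrightarrow> (f has_derivative frechet_derivative f (at z)) (at z)"
  using frechet_derivative_works by blast

lemma fd_add:
  fixes f g :: "complex \<Rightarrow> real"
  assumes "f differentiable (at z)" "g differentiable (at z)"
  shows "frechet_derivative (\<lambda>w. f w + g w) (at z) h = frechet_derivative f (at z) h + frechet_derivative g (at z) h"
proof -
  have "(\<lambda>h. frechet_derivative f (at z) h + frechet_derivative g (at z) h) = frechet_derivative (\<lambda>w. f w + g w) (at z)"
    by (rule frechet_derivative_at, rule has_derivative_add, (rule fd_works, rule assms)+)
  then show ?thesis by metis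
qed

lemma fd_scale:
  fixes f :: "complex \<Rightarrow> real"
  assumes "f differentiable (at z)"
  shows "frechet_derivative (\<lambda>w. c * f w) (at z) h = c * frechet_derivative f (at z) h"
proof -
  have "(\<lambda>h. c * frechet_derivative f (at z) h) = frechet_derivative (\<lambda>w. c * f w) (at z)"
    by (rule frechet_derivative_at, rule has_derivative_mult_right, rule fd_works, rule assms)
  then show ?thesis by metis
qed

lemma C2p_add:
  assumes f: "C2p S f" and g: "C2p S g"
  shows "C2p S (\<lambda>w. f w + g w)" "\<And>z. z \<in> S \<Longrightarrow> Lap (\<lambda>w. f w + g w) z = Lap f z + Lap g z"
proof -
  have o: "open S" using f C2p_def by auto
  have ex: "\<And>w. w \<in> S \<Longrightarrow> px (\<lambda>w. f w + g w) w = px f w + px g w"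
    "\<And>w. w \<in> S \<Longrightarrow> py (\<lambda>w. f w + g w) w = py f w + py g w"
    using f g unfolding C2p_def px_def py_def by (auto intro!: fd_add)
  have d: "\<And>w. w \<in> S \<Longrightarrow> (\<lambda>w. f w + g w) differentiable (at w)"
    using f g unfolding C2p_def by (auto intro!: differentiableI has_derivative_add fd_works)
  have dx: "\<And>w. w \<in> S \<Longrightarrow> (\<lambda>w. px f w + px g w) differentiable (at w)"
    "\<And>w. w \<in> S \<Longrightarrow> (\<lambda>w. py f w + py g w) differentiable (at w)"
    using f g unfolding C2p_def by (auto intro!: differentiableI has_derivative_add fd_works)
  show "C2p S (\<lambda>w. f w + g w)"
    unfolding C2p_def
  proof (intro conjI ballI o)
    fix w assume w: "w \<in> S"
    show "(\<lambda>w. f w + g w) differentiable at w" using d w .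
    show "px (\<lambda>w. f w + g w) differentiable at w"
      by (rule diff_cong[OF o w, of "\<lambda>w. px f w + px g w"]) (use ex(1) dx(1) w in auto)
    show "py (\<lambda>w. f w + g w) differentiable at w"
      by (rule diff_cong[OF o w, of "\<lambda>w. py f w + py g w"]) (use ex(2) dx(2) w in auto)
  qed
  fix z assume z: "z \<in> S"
  have "px (px (\<lambda>w. f w + g w)) z = px (\<lambda>w. px f w + px g w) z"
    using px_cong[OF o z ex(1)] by simp
  also have "\<dots> = px (px f) z + px (px g) z"
    using f g z unfolding C2p_def px_def[of "\<lambda>w. px f w + px g w"] px_def[of "px f"] px_def[of "px g"]
    by (auto intro!: fd_add)
  finally have 1: "px (px (\<lambda>w. f w + g w)) z = px (px f) z + px (px g) z" .
  have "py (py (\<lambda>w. f w + g w)) z = py (\<lambda>w. py f w + py g w) z"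
    using px_cong[OF o z ex(2)] by simp
  also have "\<dots> = py (py f) z + py (py g) z"
    using f g z unfolding C2p_def py_def[of "\<lambda>w. py f w + py g w"] py_def[of "py f"] py_def[of "py g"]
    by (auto intro!: fd_add)
  finally show "Lap (\<lambda>w. f w + g w) z = Lap f z + Lap g z" using 1 unfolding Lap_def by (simp add: field_simps)
qed

lemma C2p_scale:
  assumes f: "C2p S f"
  shows "C2p S (\<lambda>w. c * f w)" "\<And>z. z \<in> S \<Longrightarrow> Lap (\<lambda>w. c * f w) z = c * Lap f z"
proof -
  have o: "open S" using f C2p_def by auto
  have ex: "\<And>w. w \<in> S \<Longrightarrow> px (\<lambda>w. c * f w) w = c * px f w"
    "\<And>w. w \<in> S \<Longrightarrow> py (\<lambda>w. c * f w) w = c * py f w"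
    using f unfolding C2p_def px_def py_def by (auto intro!: fd_scale)
  have d: "\<And>w. w \<in> S \<Longrightarrow> (\<lambda>w. c * f w) differentiable (at w)"
    using f unfolding C2p_def by (auto intro!: differentiableI has_derivative_mult_right fd_works)
  have dx: "\<And>w. w \<in> S \<Longrightarrow> (\<lambda>w. c * px f w) differentiable (at w)"
    "\<And>w. w \<in> S \<Longrightarrow> (\<lambda>w. c * py f w) differentiable (at w)"
    using f unfolding C2p_def by (auto intro!: differentiableI has_derivative_mult_right fd_works)
  show "C2p S (\<lambda>w. c * f w)"
    unfolding C2p_def
  proof (intro conjI ballI o)
    fix w assume w: "w \<in> S"
    show "(\<lambda>w. c * f w) differentiable at w" using d w .
    show "px (\<lambda>w. c * f w) differentiable at w"
      by (rule diff_cong[OF o w, of "\<lambda>w. c * px f w"]) (use ex(1) dx(1) w in auto)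
    show "py (\<lambda>w. c * f w) differentiable at w"
      by (rule diff_cong[OF o w, of "\<lambda>w. c * py f w"]) (use ex(2) dx(2) w in auto)
  qed
  fix z assume z: "z \<in> S"
  have "px (px (\<lambda>w. c * f w)) z = px (\<lambda>w. c * px f w) z"
    using px_cong[OF o z ex(1)] by simp
  also have "\<dots> = c * px (px f) z"
    using f z unfolding C2p_def px_def[of "\<lambda>w. c * px f w"] px_def[of "px f"]
    by (auto intro!: fd_scale)
  finally have 1: "px (px (\<lambda>w. c * f w)) z = c * px (px f) z" .
  have "py (py (\<lambda>w. c * f w)) z = py (\<lambda>w. c * py f w) z"
    using px_cong[OF o z ex(2)] by simp
  also have "\<dots> = c * py (py f) z"
    using f z unfolding C2p_def py_def[of "\<lambda>w. c * py f w"] py_def[of "py f"]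
    by (auto intro!: fd_scale)
  finally show "Lap (\<lambda>w. c * f w) z = c * Lap f z" using 1 unfolding Lap_def by (simp add: field_simps)
qed

lemma px_const: "px (\<lambda>w. c) = (\<lambda>w. 0)" "py (\<lambda>w. c) = (\<lambda>w. 0)"
  unfolding px_def py_def by simp_all

lemma C2p_const:
  assumes "open S" shows "C2p S (\<lambda>w. c)" "Lap (\<lambda>w. c) z = 0"
  unfolding C2p_def Lap_def px_const using assms by simp_all

lemma C2p_mono: "C2p S f \<Longrightarrow> open T \<Longrightarrow> T \<subseteq> S \<Longrightarrow> C2p T f"
  unfolding C2p_def by blast

lemma C2p_ln:
  fixes h :: "complex \<Rightarrow> real"
  assumes h: "C2p S h" and pos: "\<And>w. w \<in> S \<Longrightarrow> h w > 0"
  shows "C2p S (\<lambda>w. ln (h w))"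
proof -
  have o: "open S" using h C2p_def by auto
  have D: "((\<lambda>w. ln (h w)) has_derivative (\<lambda>k. frechet_derivative h (at w) k * inverse (h w))) (at w)"
    if w: "w \<in> S" for w
    by (rule has_derivative_ln) (use pos[OF w] fd_works h w in \<open>auto simp: C2p_def\<close>)
  have ex: "\<And>w. w \<in> S \<Longrightarrow> px (\<lambda>w. ln (h w)) w = px h w * inverse (h w)"
    "\<And>w. w \<in> S \<Longrightarrow> py (\<lambda>w. ln (h w)) w = py h w * inverse (h w)"
    using px_at[OF D] py_at[OF D] by (auto simp: px_def py_def)
  show ?thesis unfolding C2p_def
  proof (intro conjI ballI o)
    fix w assume w: "w \<in> S"
    show "(\<lambda>w. ln (h w)) differentiable at w" using D[OF w] by (rule differentiableI)
    have hw: "h w \<noteq> 0" using pos[OF w] by simp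
    have "(\<lambda>w. px h w * inverse (h w)) differentiable at w"
      using h w hw unfolding C2p_def
      by (auto intro!: differentiableI has_derivative_mult has_derivative_inverse fd_works)
    then show "px (\<lambda>w. ln (h w)) differentiable at w"
      by (rule diff_cong[OF o w, rotated]) (use ex(1) in auto)
    have "(\<lambda>w. py h w * inverse (h w)) differentiable at w"
      using h w hw unfolding C2p_def
      by (auto intro!: differentiableI has_derivative_mult has_derivative_inverse fd_works)
    then show "py (\<lambda>w. ln (h w)) differentiable at w"
      by (rule diff_cong[OF o w, rotated]) (use ex(2) in auto)
  qed
qed

lemma line_deriv:
  fixes f :: "complex \<Rightarrow> real"
  assumes "f differentiable at (z + of_real t * v)"
  shows "((\<lambda>s. f (z + of_real s * v)) has_real_derivative frechet_derivative f (at (z + of_real t * v)) v) (at t)"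
proof -
  let ?F = "frechet_derivative f (at (z + of_real t * v))"
  have i: "((\<lambda>s. z + of_real s * v) has_derivative (\<lambda>s. of_real s * v)) (at t)"
    by (auto intro!: derivative_eq_intros)
  have c: "((\<lambda>s. f (z + of_real s * v)) has_derivative (\<lambda>s. ?F (of_real s * v))) (at t)"
    using has_derivative_compose[OF i fd_works[OF assms]] .
  have l: "linear ?F" using linear_frechet_derivative[OF assms] .
  have "(\<lambda>s. ?F (of_real s * v)) = (\<lambda>s. ?F v * s)"
  proof
    fix s :: real
    have "?F (of_real s * v) = ?F (s *\<^sub>R v)" by (simp add: scaleR_conv_of_real)
    also have "\<dots> = s *\<^sub>R ?F v" using l by (simp add: linear_scale)
    finally show "?F (of_real s * v) = ?F v * s" by simp
  qed
  then show ?thesis using c unfolding has_field_derivative_def by simp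
qed

lemma fermat_zero:
  fixes f :: "complex \<Rightarrow> real"
  assumes "open S" "z \<in> S" "f differentiable at z" "\<And>w. w \<in> S \<Longrightarrow> f z \<le> f w"
  shows "frechet_derivative f (at z) = (\<lambda>h. 0)"
proof -
  have "\<forall>\<^sub>F y in at z. y \<in> S" by (rule eventually_at_in_open'[OF assms(1,2)])
  then have "\<forall>\<^sub>F y in at z. f z \<le> f y" by (rule eventually_mono) (use assms(4) in auto)
  then show ?thesis using has_derivative_local_min[OF fd_works[OF assms(3)]] by blast
qed

lemma dir_second:
  fixes f :: "complex \<Rightarrow> real"
  assumes o: "open S" and z: "z \<in> S" and fdiff: "\<And>w. w \<in> S \<Longrightarrow> f differentiable at w"
    and Ddiff: "(\<lambda>w. frechet_derivative f (at w) v) differentiable at z"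
    and mn: "\<And>w. w \<in> S \<Longrightarrow> f z \<le> f w"
  shows "frechet_derivative (\<lambda>w. frechet_derivative f (at w) v) (at z) v \<ge> 0"
proof (rule ccontr)
  define D where "D = (\<lambda>w. frechet_derivative f (at w) v)"
  define d where "d = frechet_derivative D (at z) v"
  assume "\<not> ?thesis"
  then have dneg: "d < 0" unfolding d_def D_def by simp
  have Dz: "D z = 0" unfolding D_def using fermat_zero[OF o z fdiff[OF z] mn] by simp
  have "((\<lambda>s. D (z + of_real s * v)) has_real_derivative d) (at 0)"
    using line_deriv[of D z 0 v] Ddiff unfolding d_def D_def by simp
  from DERIV_neg_dec_right[OF this dneg] obtain d1 where d1: "d1 > 0"
    "\<And>h. h > 0 \<Longrightarrow> h < d1 \<Longrightarrow> D (z + of_real h * v) < 0"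
    using Dz by force
  obtain e where e: "e > 0" "ball z e \<subseteq> S" using o z open_contains_ball by blast
  define t0 where "t0 = min (d1/2) (e / (cmod v + 1))"
  have cv: "cmod v + 1 > 0" by (smt (verit) norm_ge_zero)
  have t0: "t0 > 0" "t0 < d1" using d1 e cv unfolding t0_def by auto
  have inS: "z + of_real t * v \<in> S" if "0 \<le> t" "t \<le> t0" for t
  proof -
    have "cmod (of_real t * v) = t * cmod v" using that by (simp add: norm_mult)
    also have "\<dots> \<le> t0 * cmod v" using that by (simp add: mult_right_mono)
    also have "\<dots> < e"
    proof -
      have "t0 \<le> e / (cmod v + 1)" unfolding t0_def by simp
      then have "t0 * cmod v \<le> e / (cmod v + 1) * cmod v" by (rule mult_right_mono) simp
      also have "\<dots> < e" using e cv by (simp add: field_simps)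
      finally show ?thesis .
    qed
    finally show ?thesis using e(2) by (auto simp: dist_norm)
  qed
  have "\<exists>\<xi>>0. \<xi> < t0 \<and> f (z + of_real t0 * v) - f (z + of_real 0 * v) = (t0 - 0) * D (z + of_real \<xi> * v)"
    apply (rule MVT2[OF t0(1)])
    using line_deriv[of f z _ v] fdiff inS unfolding D_def by auto
  then obtain \<xi> where xi: "\<xi> > 0" "\<xi> < t0" "f (z + of_real t0 * v) - f z = t0 * D (z + of_real \<xi> * v)"
    by auto
  have "D (z + of_real \<xi> * v) < 0" using d1(2)[of \<xi>] xi t0 by auto
  then have "f (z + of_real t0 * v) < f z" using xi(3) t0 mult_pos_neg by fastforce
  moreover have "f z \<le> f (z + of_real t0 * v)" using mn inS t0 by auto
  ultimately show False by simp
qed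

lemma Lap_min:
  assumes f: "C2p S f" and z: "z \<in> S" and mn: "\<And>w. w \<in> S \<Longrightarrow> f z \<le> f w"
  shows "Lap f z \<ge> 0"
proof -
  have o: "open S" using f C2p_def by auto
  have e1: "px f = (\<lambda>w. frechet_derivative f (at w) 1)" by (rule ext) (simp add: px_def)
  have e2: "py f = (\<lambda>w. frechet_derivative f (at w) \<i>)" by (rule ext) (simp add: py_def)
  have "px (px f) z \<ge> 0"
    unfolding px_def[of "px f"] unfolding e1
    by (rule dir_second[OF o z]) (use f z mn e1 in \<open>auto simp: C2p_def\<close>)
  moreover have "py (py f) z \<ge> 0"
    unfolding py_def[of "py f"] unfolding e2
    by (rule dir_second[OF o z]) (use f z mn e2 in \<open>auto simp: C2p_def\<close>)
  ultimately show ?thesis unfolding Lap_def by simp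
qed



lemma C2p_explicit:
  fixes f P Q :: "complex \<Rightarrow> real"
  assumes o: "open S"
    and df: "\<And>w. w \<in> S \<Longrightarrow> (f has_derivative F w) (at w)"
    and dP: "\<And>w. w \<in> S \<Longrightarrow> (P has_derivative P' w) (at w)"
    and dQ: "\<And>w. w \<in> S \<Longrightarrow> (Q has_derivative Q' w) (at w)"
    and eP: "\<And>w. w \<in> S \<Longrightarrow> F w 1 = P w"
    and eQ: "\<And>w. w \<in> S \<Longrightarrow> F w \<i> = Q w"
  shows "C2p S f" "\<And>z. z \<in> S \<Longrightarrow> Lap f z = (P' z 1 + Q' z \<i>) / 4"
proof -
  have ex: "\<And>w. w \<in> S \<Longrightarrow> px f w = P w" "\<And>w. w \<in> S \<Longrightarrow> py f w = Q w"
    using px_at[OF df] py_at[OF df] eP eQ by auto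
  show "C2p S f" unfolding C2p_def
  proof (intro conjI ballI o)
    fix w assume w: "w \<in> S"
    show "f differentiable at w" using df[OF w] by (rule differentiableI)
    show "px f differentiable at w"
      by (rule diff_cong[OF o w, of P]) (use ex dP[OF w] in \<open>auto intro: differentiableI\<close>)
    show "py f differentiable at w"
      by (rule diff_cong[OF o w, of Q]) (use ex dQ[OF w] in \<open>auto intro: differentiableI\<close>)
  qed
  fix z assume z: "z \<in> S"
  have "px (px f) z = px P z" using px_cong(1)[OF o z, of "px f" P] ex by auto
  also have "\<dots> = P' z 1" using px_at[OF dP[OF z]] .
  finally have 1: "px (px f) z = P' z 1" .
  have "py (py f) z = py Q z" using px_cong(2)[OF o z, of "py f" Q] ex by auto
  also have "\<dots> = Q' z \<i>" using py_at[OF dQ[OF z]] .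
  finally show "Lap f z = (P' z 1 + Q' z \<i>) / 4" using 1 unfolding Lap_def by simp
qed

lemma open_H: "open upper_half"
  unfolding upper_half_def using open_halfspace_Im_gt[of 0] by simp

lemma g0_pos: "z \<in> upper_half \<Longrightarrow> g0 z > 0"
  unfolding upper_half_def g0_def by auto

lemma ln_g0:
  shows "C2p upper_half (\<lambda>w. ln (g0 w))" "\<And>z. z \<in> upper_half \<Longrightarrow> Lap (\<lambda>w. ln (g0 w)) z = g0 z"
proof -
  define f where "f = (\<lambda>w::complex. - ln 2 - 2 * ln (Im w))"
  have eq: "\<And>w. w \<in> upper_half \<Longrightarrow> f w = ln (g0 w)"
    unfolding f_def g0_def upper_half_def by (simp add: ln_div ln_mult ln_realpow)
  have df: "(f has_derivative (\<lambda>h. - 2 * (Im h / Im w))) (at w)" if "w \<in> upper_half" for w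
    unfolding f_def using that unfolding upper_half_def
    by (auto intro!: derivative_eq_intros simp: field_simps)
  have dQ: "((\<lambda>w. - 2 / Im w) has_derivative (\<lambda>h. 2 * Im h / (Im w)^2)) (at w)" if "w \<in> upper_half" for w
    using that unfolding upper_half_def
    by (auto intro!: derivative_eq_intros simp: field_simps power2_eq_square)
  have dP: "((\<lambda>w::complex. 0::real) has_derivative (\<lambda>h. 0)) (at w)" for w by simp
  have C: "C2p upper_half f" and L: "\<And>z. z \<in> upper_half \<Longrightarrow> Lap f z = (0 + 2 * Im \<i> / (Im z)^2) / 4"
    using C2p_explicit[OF open_H df dP dQ] by (auto simp: field_simps)
  show "C2p upper_half (\<lambda>w. ln (g0 w))" using C2p_cong[OF C eq] .
  fix z assume z: "z \<in> upper_half"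
  have "Lap (\<lambda>w. ln (g0 w)) z = Lap f z" using Lap_cong[OF open_H z, of f] eq by auto
  also have "\<dots> = g0 z" using L[OF z] unfolding g0_def by simp
  finally show "Lap (\<lambda>w. ln (g0 w)) z = g0 z" .
qed

definition bar :: "real \<Rightarrow> complex \<Rightarrow> complex \<Rightarrow> real" where
  "bar al c w = exp (- al * ((Re w - Re c)^2 + (Im w - Im c)^2))"

lemma bar_deriv: "(bar al c has_derivative
   (\<lambda>h. bar al c w * (- al * (2 * (Re w - Re c) * Re h + 2 * (Im w - Im c) * Im h)))) (at w)"
  unfolding bar_def by (auto intro!: derivative_eq_intros simp: algebra_simps)

lemma bar_C2:
  shows "C2p UNIV (bar al c)"
    "Lap (bar al c) z = (al^2 * ((Re z - Re c)^2 + (Im z - Im c)^2) - al) * bar al c z"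
proof -
  define P where "P = (\<lambda>w. bar al c w * (- al * (2 * (Re w - Re c))))"
  define Q where "Q = (\<lambda>w. bar al c w * (- al * (2 * (Im w - Im c))))"
  have dP: "(P has_derivative (\<lambda>h. bar al c w * (- al * (2 * (Re w - Re c) * Re h + 2 * (Im w - Im c) * Im h)) * (- al * (2 * (Re w - Re c)))
        + bar al c w * (- al * (2 * Re h)))) (at w)" for w
    unfolding P_def by (auto intro!: derivative_eq_intros bar_deriv)
  have dQ: "(Q has_derivative (\<lambda>h. bar al c w * (- al * (2 * (Re w - Re c) * Re h + 2 * (Im w - Im c) * Im h)) * (- al * (2 * (Im w - Im c)))
        + bar al c w * (- al * (2 * Im h)))) (at w)" for w
    unfolding Q_def by (auto intro!: derivative_eq_intros bar_deriv)
  have eP: "\<And>w. w \<in> UNIV \<Longrightarrow> bar al c w * (- al * (2*(Re w - Re c) * Re 1 + 2*(Im w - Im c)* Im 1)) = P w"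
    by (simp add: P_def)
  have eQ: "\<And>w. w \<in> UNIV \<Longrightarrow> bar al c w * (- al * (2*(Re w - Re c) * Re \<i> + 2*(Im w - Im c)* Im \<i>)) = Q w"
    by (simp add: Q_def)
  note r = C2p_explicit[OF open_UNIV bar_deriv dP dQ eP eQ]
  show "C2p UNIV (bar al c)" using r(1) .
  show "Lap (bar al c) z = (al^2 * ((Re z - Re c)^2 + (Im z - Im c)^2) - al) * bar al c z"
    using r(2)[OF UNIV_I, where z=z] unfolding P_def Q_def by (simp add: field_simps power2_eq_square)
qed

lemma C2p_cont: "C2p S u \<Longrightarrow> continuous_on S u"
  unfolding C2p_def by (meson continuous_at_imp_continuous_on differentiable_imp_continuous_within)

lemma bar_dist: "bar al c w = exp (- al * (dist w c)^2)"
  unfolding bar_def dist_norm using cmod_power2[of "w - c"] by simp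

lemma bar_pos: "bar al c w > 0" unfolding bar_def by simp

lemma bar_le1: "al \<ge> 0 \<Longrightarrow> bar al c w \<le> 1"
  unfolding bar_def by simp

lemma hopf_local:
  fixes u A :: "complex \<Rightarrow> real"
  assumes o: "open S" and u: "C2p S u" and nn: "\<And>z. z \<in> S \<Longrightarrow> u z \<ge> 0"
    and Ac: "continuous_on S A" and L: "\<And>z. z \<in> S \<Longrightarrow> Lap u z \<le> A z * u z"
    and z0: "z0 \<in> S" "u z0 = 0" and R: "R > 0" "cball z0 R \<subseteq> S"
    and x1: "x1 \<in> ball z0 (R/2)"
  shows "u x1 = 0"
proof (rule ccontr)
  assume "u x1 \<noteq> 0"
  have x1S: "x1 \<in> S" using x1 R by auto
  have ux1: "u x1 > 0" using nn[OF x1S] \<open>u x1 \<noteq> 0\<close> by simp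
  have uc: "continuous_on S u" using C2p_cont[OF u] .
  define Z where "Z = {z \<in> cball z0 R. u z = 0}"
  have Zc: "closed Z" unfolding Z_def
    by (rule continuous_closed_preimage_constant) (use continuous_on_subset[OF uc R(2)] in auto)
  have "z0 \<in> Z" unfolding Z_def using z0 R by auto
  then obtain y where yZ: "y \<in> Z" and ymin: "\<And>y'. y' \<in> Z \<Longrightarrow> dist x1 y \<le> dist x1 y'"
    using distance_attains_inf[OF Zc] by blast
  define r where "r = dist x1 y"
  have rR: "r < R/2" using ymin[OF \<open>z0 \<in> Z\<close>] x1 unfolding r_def by (simp add: dist_commute)
  have "y \<noteq> x1" using yZ ux1 unfolding Z_def by auto
  then have r0: "r > 0" unfolding r_def by simp
  have yS: "y \<in> S" and uy: "u y = 0" using yZ R unfolding Z_def by auto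
  have cb: "cball x1 r \<subseteq> S"
  proof
    fix z assume "z \<in> cball x1 r"
    then have "dist z0 z < R" using x1 rR dist_triangle[of z0 z x1] by (auto simp: dist_commute)
    then show "z \<in> S" using R by auto
  qed
  have upos: "u z > 0" if "dist x1 z < r" for z
  proof -
    have "dist z0 z < R" using that x1 rR dist_triangle[of z0 z x1] by (auto simp: dist_commute)
    then have "z \<in> cball z0 R" by simp
    moreover have "u z \<noteq> 0"
    proof
      assume "u z = 0"
      then have "z \<in> Z" unfolding Z_def using \<open>z \<in> cball z0 R\<close> by simp
      then show False using ymin that unfolding r_def by force
    qed
    moreover have "z \<in> S" using cb that by auto
    ultimately show ?thesis using nn by force
  qed
  have "\<exists>x\<in>sphere x1 (r/2). \<forall>y\<in>sphere x1 (r/2). u x \<le> u y"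
  proof (rule continuous_attains_inf)
    have "sphere x1 (r/2) \<subseteq> S" using cb r0 by auto
    then show "continuous_on (sphere x1 (r/2)) u" using continuous_on_subset[OF uc] by blast
  qed (use r0 in auto)
  then obtain xm where xm: "xm \<in> sphere x1 (r/2)" "\<And>w. w \<in> sphere x1 (r/2) \<Longrightarrow> u xm \<le> u w" by blast
  define \<delta> where "\<delta> = u xm"
  have \<delta>: "\<delta> > 0" unfolding \<delta>_def using upos xm r0 by auto
  have "\<exists>x\<in>cball x1 r. \<forall>y\<in>cball x1 r. A y \<le> A x"
    by (rule continuous_attains_sup) (use r0 cb continuous_on_subset[OF Ac cb] in auto)
  then obtain xM where xM: "xM \<in> cball x1 r" "\<And>w. w \<in> cball x1 r \<Longrightarrow> A w \<le> A xM" by blast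
  define C where "C = max (A xM) 0"
  have C0: "C \<ge> 0" and CA: "\<And>w. w \<in> cball x1 r \<Longrightarrow> A w \<le> C" unfolding C_def using xM by force+
  define al where "al = max (8 / r^2) (C + 1)"
  have al0: "al > 0" and al1: "al * r^2 / 4 \<ge> 2" and al2: "al \<ge> C + 1"
    unfolding al_def using r0 C0 by (auto simp: field_simps max_def)
  define k where "k = exp (- al * r^2)"
  define \<epsilon> where "\<epsilon> = \<delta> / 2"
  have \<epsilon>: "\<epsilon> > 0" unfolding \<epsilon>_def using \<delta> by simp
  define W where "W = (\<lambda>w. u w + (- \<epsilon>) * bar al x1 w + \<epsilon> * k)"
  define T where "T = cball x1 r \<inter> - ball x1 (r/2)"
  have Tc: "compact T" unfolding T_def by (intro compact_Int_closed) auto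
  have T_iff: "w \<in> T \<longleftrightarrow> r/2 \<le> dist x1 w \<and> dist x1 w \<le> r" for w unfolding T_def by auto
  have barT: "bar al x1 w - k = 0" if "dist x1 w = r" for w
    unfolding bar_dist k_def using that by (simp add: dist_commute)
  have Wc: "continuous_on T W"
  proof -
    have "T \<subseteq> S" using cb unfolding T_def by auto
    then have "continuous_on T u" using continuous_on_subset[OF uc] by blast
    moreover have "continuous_on T (bar al x1)" unfolding bar_def by (intro continuous_intros)
    ultimately show ?thesis unfolding W_def by (intro continuous_intros)
  qed
  have "xm \<in> T" unfolding T_iff using xm(1) r0 by simp
  then have "T \<noteq> {}" by blast
  then obtain xs where xs: "xs \<in> T" "\<And>w. w \<in> T \<Longrightarrow> W xs \<le> W w"
    using continuous_attains_inf[OF Tc _ Wc] by blast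
  have Wnn: "W xs \<ge> 0"
  proof (rule ccontr)
    assume "\<not> W xs \<ge> 0"
    then have Wneg: "W xs < 0" by simp
    have xsS: "xs \<in> S" using xs cb unfolding T_def by auto
    have "dist x1 xs \<noteq> r"
    proof
      assume "dist x1 xs = r"
      then have "W xs = u xs" unfolding W_def using barT[of xs] by (simp add: algebra_simps)
      then show False using Wneg nn[OF xsS] by simp
    qed
    moreover have "dist x1 xs \<noteq> r/2"
    proof
      assume "dist x1 xs = r/2"
      then have "u xs \<ge> \<delta>" unfolding \<delta>_def using xm by auto
      moreover have "bar al x1 xs - k < 1" using bar_le1[of al x1 xs] al0 exp_gt_zero[of "- al * r^2"]
        unfolding k_def by linarith
      moreover have "W xs = u xs - \<epsilon> * (bar al x1 xs - k)" unfolding W_def by (simp add: algebra_simps)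
      moreover have "\<epsilon> * (bar al x1 xs - k) < \<epsilon> * 1"
        using \<open>bar al x1 xs - k < 1\<close> \<epsilon> by (intro mult_strict_left_mono) auto
      ultimately have "W xs > 0" unfolding \<epsilon>_def using \<delta> by linarith
      then show False using Wneg by simp
    qed
    ultimately have xsU: "xs \<in> ball x1 r - cball x1 (r/2)" using xs(1) T_iff by auto
    define U where "U = ball x1 r - cball x1 (r/2)"
    have oU: "open U" unfolding U_def by auto
    have US: "U \<subseteq> S" unfolding U_def using cb by auto
    have UT: "U \<subseteq> T" unfolding U_def T_def by auto
    have uU: "C2p U u" using C2p_mono[OF u oU US] .
    have bU: "C2p U (bar al x1)" using C2p_mono[OF bar_C2(1) oU] by simp
    have b2: "C2p U (\<lambda>w. (- \<epsilon>) * bar al x1 w)" using C2p_scale(1)[OF bU] .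
    have b3: "C2p U (\<lambda>w. u w + (- \<epsilon>) * bar al x1 w)" using C2p_add(1)[OF uU b2] .
    have WU: "C2p U W" unfolding W_def using C2p_add(1)[OF b3 C2p_const(1)[OF oU]] .
    have xsU': "xs \<in> U" using xsU unfolding U_def .
    have LW0: "Lap W xs \<ge> 0" by (rule Lap_min[OF WU xsU']) (use xs(2) UT in auto)
    have LWe: "Lap W xs = Lap u xs - \<epsilon> * Lap (bar al x1) xs"
    proof -
      have e1: "Lap W xs = Lap (\<lambda>w. u w + (- \<epsilon>) * bar al x1 w) xs + Lap (\<lambda>w. \<epsilon> * k) xs"
        unfolding W_def by (rule C2p_add(2)[OF b3 C2p_const(1)[OF oU] xsU'])
      have e2: "Lap (\<lambda>w. u w + (- \<epsilon>) * bar al x1 w) xs = Lap u xs + Lap (\<lambda>w. (- \<epsilon>) * bar al x1 w) xs"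
        by (rule C2p_add(2)[OF uU b2 xsU'])
      have e3: "Lap (\<lambda>w. (- \<epsilon>) * bar al x1 w) xs = (- \<epsilon>) * Lap (bar al x1) xs"
        by (rule C2p_scale(2)[OF bU xsU'])
      show ?thesis using e1 e2 e3 C2p_const(2)[OF oU] by simp
    qed
    have Lb: "Lap (bar al x1) xs \<ge> (C + 1) * bar al x1 xs"
    proof -
      have d2: "(Re xs - Re x1)^2 + (Im xs - Im x1)^2 = (dist x1 xs)^2"
        using cmod_power2[of "xs - x1"] by (simp add: dist_norm norm_minus_commute)
      have "dist x1 xs \<ge> r/2" using xs(1) T_iff by auto
      then have "(dist x1 xs)^2 \<ge> (r/2)^2" using r0 by (simp add: power_mono)
      then have "al^2 * (dist x1 xs)^2 - al \<ge> al^2 * (r/2)^2 - al"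
        by (simp add: mult_left_mono)
      moreover have "al^2 * (r/2)^2 - al = al * (al * r^2 / 4 - 1)" by (simp add: power2_eq_square field_simps)
      moreover have "al * (al * r^2 / 4 - 1) \<ge> al * 1" using al1 al0 by (intro mult_left_mono) auto
      ultimately have "al^2 * (dist x1 xs)^2 - al \<ge> C + 1" using al2 by linarith
      then show ?thesis unfolding bar_C2(2) d2 using bar_pos[of al x1 xs] by (simp add: mult_right_mono)
    qed
    have Lu: "Lap u xs \<le> C * (\<epsilon> * bar al x1 xs)"
    proof -
      have "Lap u xs \<le> A xs * u xs" using L[OF xsS] .
      also have "\<dots> \<le> C * u xs" using CA[of xs] xs(1) nn[OF xsS] unfolding T_def by (auto intro: mult_right_mono)
      also have "\<dots> \<le> C * (\<epsilon> * bar al x1 xs)"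
      proof -
        have "u xs < \<epsilon> * (bar al x1 xs - k)" using Wneg unfolding W_def by (simp add: algebra_simps)
        also have "\<dots> \<le> \<epsilon> * bar al x1 xs" using \<epsilon> unfolding k_def by simp
        finally show ?thesis using C0 by (simp add: mult_left_mono)
      qed
      finally show ?thesis .
    qed
    have "\<epsilon> * ((C + 1) * bar al x1 xs) \<le> \<epsilon> * Lap (bar al x1) xs"
      using Lb \<epsilon> by (intro mult_left_mono) auto
    moreover have "C * (\<epsilon> * bar al x1 xs) - \<epsilon> * ((C + 1) * bar al x1 xs) = - (\<epsilon> * bar al x1 xs)"
      by (simp add: algebra_simps)
    moreover have "\<epsilon> * bar al x1 xs > 0" using \<epsilon> bar_pos[of al x1 xs] by simp
    ultimately show False using LW0 LWe Lu by linarith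
  qed
  have WT: "\<And>w. w \<in> T \<Longrightarrow> W w \<ge> 0" using Wnn xs(2) by force
  \<comment> \<open>Hopf boundary point argument at y\<close>
  have Wy: "W y = 0" unfolding W_def using barT[of y] uy unfolding r_def by (simp add: algebra_simps)
  have Du: "frechet_derivative u (at y) = (\<lambda>h. 0)"
    by (rule fermat_zero[OF o yS]) (use u yS nn uy in \<open>auto simp: C2p_def\<close>)
  have udiff: "u differentiable at y" using u yS by (auto simp: C2p_def)
  define d where "d = x1 - y"
  have Du': "(u has_derivative (\<lambda>h. 0)) (at y)" using fd_works[OF udiff] Du by simp
  define DB where "DB = (\<lambda>h. bar al x1 y * (- al * (2 * (Re y - Re x1) * Re h + 2 * (Im y - Im x1) * Im h)))"
  have DW: "(W has_derivative (\<lambda>h. 0 + (- \<epsilon>) * DB h + 0)) (at y)"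
    unfolding W_def DB_def
    by (rule has_derivative_add[OF has_derivative_add[OF Du' has_derivative_mult_right[OF bar_deriv]] has_derivative_const])
  have Wdiff: "W differentiable at y" using DW by (rule differentiableI)
  have "((\<lambda>s. W (y + of_real s * d)) has_real_derivative frechet_derivative W (at y) d) (at 0)"
    using line_deriv[of W y 0 d] Wdiff by simp
  moreover have "frechet_derivative W (at y) d = - \<epsilon> * bar al x1 y * (2 * al * r^2)"
  proof -
    have "frechet_derivative W (at y) = (\<lambda>h. 0 + (- \<epsilon>) * DB h + 0)"
      using frechet_derivative_at[OF DW] by simp
    then have "frechet_derivative W (at y) d = (- \<epsilon>) * DB d" by simp
    moreover have "(Re y - Re x1) * Re d + (Im y - Im x1) * Im d = - (r^2)"
    proof -
      have "r^2 = (Re (x1 - y))^2 + (Im (x1 - y))^2" unfolding r_def dist_norm using cmod_power2 by simp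
      then show ?thesis unfolding d_def by (simp add: power2_eq_square algebra_simps)
    qed
    moreover have "DB d = bar al x1 y * (- al * (2 * ((Re y - Re x1) * Re d + (Im y - Im x1) * Im d)))"
      unfolding DB_def by (simp add: algebra_simps)
    ultimately have "frechet_derivative W (at y) d = (- \<epsilon>) * (bar al x1 y * (- al * (2 * (- (r^2)))))"
      by simp
    then show ?thesis by (simp add: algebra_simps)
  qed
  moreover have "- \<epsilon> * bar al x1 y * (2 * al * r^2) < 0"
  proof -
    have "\<epsilon> * bar al x1 y * (2 * al * r^2) > 0" using \<epsilon> bar_pos[of al x1 y] al0 r0 by simp
    then show ?thesis by simp
  qed
  ultimately have "((\<lambda>s. W (y + of_real s * d)) has_real_derivative - \<epsilon> * bar al x1 y * (2 * al * r^2)) (at 0)"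
    and "- \<epsilon> * bar al x1 y * (2 * al * r^2) < 0" by simp_all
  from DERIV_neg_dec_right[OF this] obtain dd where dd: "dd > 0"
    "\<And>h. h > 0 \<Longrightarrow> h < dd \<Longrightarrow> W (y + of_real (0 + h) * d) < W (y + of_real 0 * d)"
    by blast
  define t where "t = min (dd/2) (1/2)"
  have t: "t > 0" "t < dd" "t \<le> 1/2" unfolding t_def using dd by auto
  have "dist x1 (y + of_real t * d) = (1 - t) * r"
  proof -
    have "x1 - (y + of_real t * d) = of_real (1 - t) * (x1 - y)" unfolding d_def by (simp add: algebra_simps)
    moreover have "cmod (1 - complex_of_real t) = 1 - t"
    proof -
      have "1 - complex_of_real t = of_real (1 - t)" by simp
      then show ?thesis using t by (simp only: norm_of_real)
    qed
    ultimately show ?thesis unfolding r_def dist_norm using t by (simp add: norm_mult)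
  qed
  moreover have "r * t \<le> r * (1/2)" using t r0 by (intro mult_left_mono) auto
  moreover have "r * t \<ge> 0" using t r0 by simp
  moreover have "(1 - t) * r = r - r * t" by (simp add: algebra_simps)
  ultimately have "y + of_real t * d \<in> T" unfolding T_iff by linarith
  then have "W (y + of_real t * d) \<ge> 0" using WT by blast
  moreover have "W (y + of_real t * d) < 0" using dd(2)[OF t(1) t(2)] Wy by simp
  ultimately show False by simp
qed

lemma strong_min:
  fixes u A :: "complex \<Rightarrow> real"
  assumes o: "open S" and conn: "connected S" and u: "C2p S u" and nn: "\<And>z. z \<in> S \<Longrightarrow> u z \<ge> 0"
    and Ac: "continuous_on S A" and L: "\<And>z. z \<in> S \<Longrightarrow> Lap u z \<le> A z * u z"
    and p: "p \<in> S" "u p = 0"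
  shows "\<forall>z\<in>S. u z = 0"
proof -
  define Z where "Z = {z \<in> S. u z = 0}"
  have "open Z" unfolding open_subopen[of Z]
  proof
    fix z0 assume "z0 \<in> Z"
    then have z0: "z0 \<in> S" "u z0 = 0" unfolding Z_def by auto
    obtain R where R: "R > 0" "cball z0 R \<subseteq> S" using o z0(1) open_contains_cball by blast
    have "ball z0 (R/2) \<subseteq> Z"
    proof
      fix x1 assume x1: "x1 \<in> ball z0 (R/2)"
      have "u x1 = 0" by (rule hopf_local[OF o u nn Ac L z0 R x1])
      moreover have "x1 \<in> S" using x1 R by auto
      ultimately show "x1 \<in> Z" unfolding Z_def by simp
    qed
    then show "\<exists>T. open T \<and> z0 \<in> T \<and> T \<subseteq> Z" using R by (intro exI[of _ "ball z0 (R/2)"]) auto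
  qed
  then have "openin (top_of_set S) Z" using openin_open_eq[OF o] unfolding Z_def by auto
  moreover have "closedin (top_of_set S) Z"
    unfolding Z_def by (rule continuous_closedin_preimage_constant[OF C2p_cont[OF u]])
  ultimately have "Z = {} \<or> Z = S" using conn unfolding connected_clopen by blast
  moreover have "p \<in> Z" unfolding Z_def using p by simp
  ultimately show ?thesis unfolding Z_def by auto
qed



lemma mob_Im:
  assumes det: "(case g of (a,b,c,d) \<Rightarrow> a*d - b*c = 1)" and z: "Im z > 0"
  shows "jfac g z \<noteq> 0" "Im (mob g z) = Im z / (cmod (jfac g z))^2"
proof -
  obtain a b c d where g: "g = (a,b,c,d)" by (cases g) auto
  have det': "a*d - b*c = 1" using det g by simp
  show nz: "jfac g z \<noteq> 0"
  proof
    assume "jfac g z = 0"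
    then have "of_real c * z + of_real d = 0" unfolding g jfac_def by simp
    then have "Im (of_real c * z + of_real d) = 0" "Re (of_real c * z + of_real d) = 0" by simp_all
    then have "c * Im z = 0" "c * Re z + d = 0" by simp_all
    then have "c = 0" "d = 0" using z by auto
    then show False using det' by simp
  qed
  have "Im (mob g z) = (Im (of_real a * z + of_real b) * Re (of_real c * z + of_real d) - Re (of_real a * z + of_real b) * Im (of_real c * z + of_real d)) / (cmod (jfac g z))^2"
  proof -
    have "mob g z = (of_real a * z + of_real b) / (of_real c * z + of_real d)" unfolding g mob_def by simp
    moreover have "jfac g z = of_real c * z + of_real d" unfolding g jfac_def by simp
    ultimately show ?thesis by (simp only: Im_divide')
  qed
  also have "Im (of_real a * z + of_real b) * Re (of_real c * z + of_real d) - Re (of_real a * z + of_real b) * Im (of_real c * z + of_real d)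
      = (a*d - b*c) * Im z" by (simp add: algebra_simps)
  finally show "Im (mob g z) = Im z / (cmod (jfac g z))^2" using det' by simp
qed

lemma g0_mob:
  assumes det: "(case g of (a,b,c,d) \<Rightarrow> a*d - b*c = 1)" and z: "Im z > 0"
  shows "g0 (mob g z) = (cmod (jfac g z))^4 * g0 z"
proof -
  have nz: "cmod (jfac g z) \<noteq> 0" using mob_Im(1)[OF det z] by simp
  show ?thesis unfolding g0_def mob_Im(2)[OF det z] using nz z
    by (simp add: field_simps power2_eq_square power4_eq_xxxx)
qed

lemma min_attained:
  fixes f :: "complex \<Rightarrow> real"
  assumes G: "cocompact_fuchsian G" and fc: "continuous_on upper_half f"
    and inv: "\<And>g z. g \<in> G \<Longrightarrow> z \<in> upper_half \<Longrightarrow> f (mob g z) = f z"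
  shows "\<exists>p\<in>upper_half. \<forall>z\<in>upper_half. f p \<le> f z"
proof -
  have "\<exists>K. compact K \<and> K \<subseteq> upper_half \<and> (\<forall>z\<in>upper_half. \<exists>g\<in>G. mob g z \<in> K)"
    using G unfolding cocompact_fuchsian_def by (elim conjE) assumption
  then obtain K where K: "compact K" "K \<subseteq> upper_half" "\<And>z. z \<in> upper_half \<Longrightarrow> \<exists>g\<in>G. mob g z \<in> K"
    by blast
  have "\<i> \<in> upper_half" unfolding upper_half_def by simp
  then have "K \<noteq> {}" using K(3) by blast
  then obtain p where p: "p \<in> K" "\<And>w. w \<in> K \<Longrightarrow> f p \<le> f w"
    using continuous_attains_inf[OF K(1) _ continuous_on_subset[OF fc K(2)]] by blast
  have "\<forall>z\<in>upper_half. f p \<le> f z"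
  proof
    fix z assume z: "z \<in> upper_half"
    obtain g where g: "g \<in> G" "mob g z \<in> K" using K(3)[OF z] by blast
    show "f p \<le> f z" using p(2)[OF g(2)] inv[OF g(1) z] by simp
  qed
  then show ?thesis using p K by blast
qed

lemma connected_H: "connected upper_half"
  unfolding upper_half_def using convex_connected[OF convex_halfspace_Im_gt[of 0]] by simp

lemma g0_cont: "continuous_on upper_half g0"
  unfolding g0_def upper_half_def by (intro continuous_intros) auto

lemma C2_C2p: "C2_on upper_half f \<Longrightarrow> C2p upper_half f"
  unfolding C2_on_def C2p_def using open_H by auto

lemma C2p_comb:
  assumes f1: "C2p S f1" and f2: "C2p S f2" and f3: "C2p S f3"
  shows "C2p S (\<lambda>w. a1 * f1 w + a2 * f2 w + a3 * f3 w + b)"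
    "\<And>z. z \<in> S \<Longrightarrow> Lap (\<lambda>w. a1 * f1 w + a2 * f2 w + a3 * f3 w + b) z = a1 * Lap f1 z + a2 * Lap f2 z + a3 * Lap f3 z"
proof -
  have o: "open S" using f1 C2p_def by auto
  note s1 = C2p_scale[OF f1, where c=a1] and s2 = C2p_scale[OF f2, where c=a2] and s3 = C2p_scale[OF f3, where c=a3]
  note p12 = C2p_add[OF s1(1) s2(1)]
  note p123 = C2p_add[OF p12(1) s3(1)]
  note cst = C2p_const[OF o, where c=b]
  note all = C2p_add[OF p123(1) cst(1)]
  show "C2p S (\<lambda>w. a1 * f1 w + a2 * f2 w + a3 * f3 w + b)" using all(1) .
  fix z assume z: "z \<in> S"
  show "Lap (\<lambda>w. a1 * f1 w + a2 * f2 w + a3 * f3 w + b) z = a1 * Lap f1 z + a2 * Lap f2 z + a3 * Lap f3 z"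
    using all(2)[OF z] p123(2)[OF z] p12(2)[OF z] s1(2)[OF z] s2(2)[OF z] s3(2)[OF z] cst(2) by simp
qed

lemma lin_id: "2 * x - y - w = (1::real) \<Longrightarrow> 2 * (x * G) - y * G - w * G = G"
proof -
  assume "2 * x - y - w = 1"
  moreover have "2 * (x * G) - y * G - w * G = (2 * x - y - w) * G" by (simp add: algebra_simps)
  ultimately show ?thesis by simp
qed

lemma lin_id2: "2 * x - 2 * y = (1::real) \<Longrightarrow> 2 * (x * G) - 2 * (y * G) = G"
proof -
  assume "2 * x - 2 * y = 1"
  moreover have "2 * (x * G) - 2 * (y * G) = (2 * x - 2 * y) * G" by (simp add: algebra_simps)
  ultimately show ?thesis by simp
qed

theorem mainTheorem2:
  fixes G :: "(real \<times> real \<times> real \<times> real) set"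
    and m n :: nat
    and q :: "complex \<Rightarrow> complex"
    and h :: "nat \<Rightarrow> complex \<Rightarrow> real"
  assumes G: "cocompact_fuchsian G"
    and m2: "m \<ge> 2" and n_def: "n = 2 * m"
    and q: "holo_diff G n q"
    and h_pos: "\<And>k z. 1 \<le> k \<Longrightarrow> k \<le> m \<Longrightarrow> z \<in> upper_half \<Longrightarrow> h k z > 0"
    and h_C2: "\<And>k. 1 \<le> k \<Longrightarrow> k \<le> m \<Longrightarrow> C2_on upper_half (h k)"
    and h_equiv: "\<And>k. 1 \<le> k \<Longrightarrow> k \<le> m \<Longrightarrow>
        equivariant_density G (2 * int k - int n - 1) (h k)"
    and eq1: "\<And>z. z \<in> upper_half \<Longrightarrow>
        Lap (\<lambda>w. ln (h 1 w)) z + h 2 z / h 1 z - (h 1 z)^2 * (cmod (q z))^2 = 0"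
    and eqk: "\<And>k z. 2 \<le> k \<Longrightarrow> k \<le> m - 1 \<Longrightarrow> z \<in> upper_half \<Longrightarrow>
        Lap (\<lambda>w. ln (h k w)) z + h (k+1) z / h k z - h k z / h (k-1) z = 0"
    and eqm: "\<And>z. z \<in> upper_half \<Longrightarrow>
        Lap (\<lambda>w. ln (h m w)) z + 1 / (h m z)^2 - h m z / h (m-1) z = 0"
  shows "(\<forall>z\<in>upper_half.
            (\<forall>k. 1 \<le> k \<and> k \<le> m - 1 \<longrightarrow>
               h (k+1) z / h k z \<ge> (real k * real m - (real k)^2 / 2) * g0 z) \<and>
            1 / (h m z)^2 \<ge> (real m)^2 / 2 * g0 z)
       \<and> ((\<exists>z\<in>upper_half.
            (\<exists>k. 1 \<le> k \<and> k \<le> m - 1 \<and>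
               h (k+1) z / h k z = (real k * real m - (real k)^2 / 2) * g0 z) \<or>
            1 / (h m z)^2 = (real m)^2 / 2 * g0 z)
          \<longrightarrow> (\<forall>z\<in>upper_half. q z = 0))"
proof -
  have hC: "C2p upper_half (h k)" if "1 \<le> k" "k \<le> m" for k using C2_C2p h_C2 that by blast
  have lnC: "C2p upper_half (\<lambda>w. ln (h k w))" if "1 \<le> k" "k \<le> m" for k
    using C2p_ln[OF hC[OF that]] h_pos that by blast
  have hcont: "continuous_on upper_half (h k)" if "1 \<le> k" "k \<le> m" for k using C2p_cont[OF hC[OF that]] .
  define c where "c = (\<lambda>j::nat. real j * real m - (real j)^2 / 2)"
  define a where "a = (\<lambda>j z. if j = 0 then (h 1 z)^2 * (cmod (q z))^2 else if j < m then h (j+1) z / h j z else 1 / (h m z)^2)"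
  define r where "r = (\<lambda>j z. a j z / (c j * g0 z))"
  define U where "U = (\<lambda>j. if j < m then (\<lambda>w. 1 * ln (h (j+1) w) + (-1) * ln (h j w) + (-1) * ln (g0 w) + (- ln (c j)))
                          else (\<lambda>w. (-2) * ln (h m w) + 0 * ln (h m w) + (-1) * ln (g0 w) + (- ln (c m))))"
  have c0: "c 0 = 0" unfolding c_def by simp
  have cid: "2 * c j - c (j+1) - c (j-1) = 1" if "1 \<le> j" for j
  proof -
    have "real (j - 1) = real j - 1" using that by (simp add: of_nat_diff)
    then show ?thesis unfolding c_def by (simp add: power2_eq_square field_simps)
  qed
  have cidm: "2 * c m - 2 * c (m-1) = 1"
  proof -
    have "real (m - 1) = real m - 1" using m2 by (simp add: of_nat_diff)
    then show ?thesis unfolding c_def by (simp add: power2_eq_square field_simps)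
  qed
  have cpos: "c j > 0" if "1 \<le> j" "j \<le> m" for j
  proof -
    have "c j = real j * (real m - real j / 2)" unfolding c_def by (simp add: power2_eq_square algebra_simps)
    moreover have "real m - real j / 2 > 0" using that by simp
    ultimately show ?thesis using that by simp
  qed
  have cm: "c m = (real m)^2 / 2" unfolding c_def by (simp add: power2_eq_square)
  have a0: "a 0 z = (h 1 z)^2 * (cmod (q z))^2" for z unfolding a_def by simp
  have alt: "a j z = h (j+1) z / h j z" if "1 \<le> j" "j < m" for j z unfolding a_def using that by simp
  have am: "a m z = 1 / (h m z)^2" for z unfolding a_def using m2 by simp
  have apos: "a j z > 0" if "1 \<le> j" "j \<le> m" "z \<in> upper_half" for j z
  proof (cases "j < m")
    case True then show ?thesis using alt[OF that(1) True] h_pos that by simp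
  next
    case False then have "j = m" using that by simp
    have "h m z > 0" using h_pos[of m z] that m2 by simp
    then show ?thesis using am \<open>j = m\<close> by simp
  qed
  have a0nn: "a 0 z \<ge> 0" for z unfolding a0 by simp
  have rpos: "r j z > 0" if "1 \<le> j" "j \<le> m" "z \<in> upper_half" for j z
    unfolding r_def using apos[OF that] cpos[OF that(1,2)] g0_pos[OF that(3)] by simp
  have a_r: "a j z = c j * g0 z * r j z" if "1 \<le> j" "j \<le> m" "z \<in> upper_half" for j z
    unfolding r_def using cpos[OF that(1,2)] g0_pos[OF that(3)] by simp
  have U_r: "U j z = ln (r j z)" if "1 \<le> j" "j \<le> m" "z \<in> upper_half" for j z
  proof (cases "j < m")
    case True
    have "r j z = h (j+1) z / h j z / (c j * g0 z)" unfolding r_def using alt[OF that(1) True] by simp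
    moreover have "h (j+1) z > 0" "h j z > 0" using h_pos that True by auto
    moreover have "c j > 0" "g0 z > 0" using cpos[OF that(1,2)] g0_pos[OF that(3)] by auto
    ultimately show ?thesis unfolding U_def using True by (simp add: ln_div ln_mult)
  next
    case False then have jm: "j = m" using that by simp
    have "r j z = 1 / (h m z)^2 / (c m * g0 z)" unfolding r_def jm using am by simp
    moreover have "h m z > 0" using h_pos that m2 by auto
    moreover have "c m > 0" "g0 z > 0" using cpos[of m] m2 g0_pos[OF that(3)] by auto
    ultimately show ?thesis unfolding U_def using jm by (simp add: ln_div ln_mult ln_realpow)
  qed
  have Ult: "U j = (\<lambda>w. 1 * ln (h (j+1) w) + (-1) * ln (h j w) + (-1) * ln (g0 w) + (- ln (c j)))" if "j < m" for j
    unfolding U_def using that by simp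
  have Um: "U m = (\<lambda>w. (-2) * ln (h m w) + 0 * ln (h m w) + (-1) * ln (g0 w) + (- ln (c m)))"
    unfolding U_def by simp
  have UC: "C2p upper_half (U j)" if "1 \<le> j" "j \<le> m" for j
  proof (cases "j < m")
    case True
    show ?thesis unfolding Ult[OF True] by (rule C2p_comb(1)[OF lnC[of "j+1"] lnC[of j] ln_g0(1)]) (use that True in auto)
  next
    case False
    then have "j = m" using that by simp
    show ?thesis unfolding \<open>j = m\<close> Um by (rule C2p_comb(1)[OF lnC[of m] lnC[of m] ln_g0(1)]) (use m2 in auto)
  qed
  have Lapl: "Lap (\<lambda>w. ln (h k w)) z = a (k-1) z - a k z" if "1 \<le> k" "k \<le> m" "z \<in> upper_half" for k z
  proof -
    have "k = 1 \<or> (k = m \<and> k \<noteq> 1) \<or> (2 \<le> k \<and> k \<le> m - 1)" using that by auto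
    then consider "k = 1" | "k = m" "k \<noteq> 1" | "2 \<le> k" "k \<le> m - 1" by blast
    then show ?thesis
    proof cases
      case 1
      then show ?thesis using eq1[OF that(3)] a0[of z] alt[of 1 z] m2 by (simp add: numeral_2_eq_2)
    next
      case 2
      have "a (m-1) z = h m z / h (m-1) z" using alt[of "m-1" z] m2 by simp
      then show ?thesis using eqm[OF that(3)] am[of z] 2 by simp
    next
      case 3
      have "a (k-1) z = h k z / h (k-1) z" using alt[of "k-1" z] 3 by simp
      moreover have "a k z = h (k+1) z / h k z" using alt[of k z] 3 by simp
      ultimately show ?thesis using eqk[OF 3 that(3)] by simp
    qed
  qed
  have LapU: "Lap (U j) z = (if j < m then 2 * a j z - a (j+1) z - a (j-1) z else 2 * a m z - 2 * a (m-1) z) - g0 z"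
    if "1 \<le> j" "j \<le> m" "z \<in> upper_half" for j z
  proof (cases "j < m")
    case True
    have "Lap (U j) z = 1 * Lap (\<lambda>w. ln (h (j+1) w)) z + (-1) * Lap (\<lambda>w. ln (h j w)) z + (-1) * Lap (\<lambda>w. ln (g0 w)) z"
      unfolding Ult[OF True] by (rule C2p_comb(2)[OF lnC[of "j+1"] lnC[of j] ln_g0(1) that(3)]) (use that True in auto)
    then show ?thesis using Lapl[of "j+1" z] Lapl[of j z] ln_g0(2)[OF that(3)] that True by simp
  next
    case False
    then have jm: "j = m" using that by simp
    have "Lap (U j) z = (-2) * Lap (\<lambda>w. ln (h m w)) z + 0 * Lap (\<lambda>w. ln (h m w)) z + (-1) * Lap (\<lambda>w. ln (g0 w)) z"
      unfolding jm Um by (rule C2p_comb(2)[OF lnC[of m] lnC[of m] ln_g0(1) that(3)]) (use m2 in auto)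
    then show ?thesis using Lapl[of m z] ln_g0(2)[OF that(3)] m2 jm that(3) by simp
  qed
  have detG: "\<forall>g\<in>G. case g of (a,b,c,d) \<Rightarrow> a*d - b*c = 1"
    using G unfolding cocompact_fuchsian_def by (elim conjE) assumption
  have ainv: "a j (mob g z) = (cmod (jfac g z))^4 * a j z"
    if "1 \<le> j" "j \<le> m" "g \<in> G" "z \<in> upper_half" for j g z
  proof -
    have det: "case g of (a,b,c,d) \<Rightarrow> a*d - b*c = 1" using detG that(3) by blast
    have zI: "Im z > 0" using that(4) unfolding upper_half_def by simp
    define P where "P = cmod (jfac g z)"
    have P: "P > 0" unfolding P_def using mob_Im(1)[OF det zI] by simp
    have heq: "h k (mob g z) = P powr (2 * real_of_int (2 * int k - int n - 1)) * h k z" if "1 \<le> k" "k \<le> m" for k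
      using h_equiv[OF that] \<open>g \<in> G\<close> \<open>z \<in> upper_half\<close> unfolding equivariant_density_def P_def by blast
    show ?thesis
    proof (cases "j < m")
      case True
      define e0 where "e0 = 2 * real_of_int (2 * int j - int n - 1)"
      have "2 * real_of_int (2 * int (j+1) - int n - 1) = e0 + 4" unfolding e0_def by simp
      then have e1: "P powr (2 * real_of_int (2 * int (j+1) - int n - 1)) = P powr e0 * P^4"
        using P by (simp add: powr_add powr_numeral)
      have pe0: "P powr e0 > 0" using P by simp
      have "a j (mob g z) = h (j+1) (mob g z) / h j (mob g z)" using alt[OF that(1) True] by simp
      also have "\<dots> = (P powr e0 * P^4 * h (j+1) z) / (P powr e0 * h j z)"
        using heq[of "j+1"] heq[of j] e1 that True unfolding e0_def by simp
      also have "\<dots> = P^4 * (h (j+1) z / h j z)" using pe0 by (simp add: field_simps)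
      finally show ?thesis using alt[OF that(1) True] unfolding P_def by simp
    next
      case False
      then have jm: "j = m" using that by simp
      have "2 * real_of_int (2 * int m - int n - 1) = -2" using n_def by simp
      then have "h m (mob g z) = P powr (-2) * h m z" using heq[of m] m2 by simp
      also have "\<dots> = h m z / P^2" using P by (simp add: powr_minus powr_numeral divide_inverse)
      finally have "h m (mob g z) = h m z / P^2" .
      then have "a m (mob g z) = 1 / (h m z / P^2)^2" by (simp only: am)
      also have "\<dots> = 1 / ((h m z)^2 / P^4)" by (simp add: power_divide flip: power_mult)
      also have "\<dots> = P^4 * a m z" unfolding am by simp
      finally have "a m (mob g z) = P^4 * a m z" .
      then show ?thesis using jm unfolding P_def by simp
    qed
  qed
  have rinv: "r j (mob g z) = r j z" if "1 \<le> j" "j \<le> m" "g \<in> G" "z \<in> upper_half" for j g z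
  proof -
    have det: "case g of (a,b,c,d) \<Rightarrow> a*d - b*c = 1" using detG that(3) by blast
    have zI: "Im z > 0" using that(4) unfolding upper_half_def by simp
    have P: "cmod (jfac g z) > 0" using mob_Im(1)[OF det zI] by simp
    show ?thesis unfolding r_def ainv[OF that] g0_mob[OF det zI] using P by simp
  qed
  have acont: "continuous_on upper_half (a j)" if "1 \<le> j" "j \<le> m" for j
  proof (cases "j < m")
    case True
    have "continuous_on upper_half (\<lambda>z. h (j+1) z / h j z)"
      by (rule continuous_on_divide[OF hcont hcont]) (use that True h_pos in \<open>auto simp: less_imp_neq[symmetric]\<close>)
    then show ?thesis using alt[OF that(1) True] by (simp add: continuous_on_eq)
  next
    case False
    then have jm: "j = m" using that by simp
    have "continuous_on upper_half (\<lambda>z. 1 / (h m z)^2)"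
      by (intro continuous_intros hcont) (use m2 h_pos[of m] in force)+
    then show ?thesis using am jm by simp
  qed
  have rcont: "continuous_on upper_half (r j)" if "1 \<le> j" "j \<le> m" for j
  proof -
    have "continuous_on upper_half (\<lambda>z. a j z / (c j * g0 z))"
      by (intro continuous_intros acont that g0_cont) (use cpos[OF that] g0_pos in force)+
    then show ?thesis unfolding r_def by simp
  qed
  have r1_iff: "r j z = 1 \<longleftrightarrow> a j z = c j * g0 z" if "1 \<le> j" "j \<le> m" "z \<in> upper_half" for j z
    unfolding r_def using cpos[OF that(1,2)] g0_pos[OF that(3)] by auto
  have Ulap_nn: "Lap (U j) p \<ge> 0" if "1 \<le> j" "j \<le> m" "p \<in> upper_half" "\<And>w. w \<in> upper_half \<Longrightarrow> r j p \<le> r j w" for j p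
  proof (rule Lap_min[OF UC[OF that(1,2)] that(3)])
    fix w assume w: "w \<in> upper_half"
    show "U j p \<le> U j w" unfolding U_r[OF that(1,2,3)] U_r[OF that(1,2) w]
      using that(4)[OF w] rpos[OF that(1,2,3)] by simp
  qed
  have "\<forall>j\<in>{1..m}. \<exists>p\<in>upper_half. \<forall>z\<in>upper_half. r j p \<le> r j z"
  proof
    fix j assume "j \<in> {1..m}"
    then have j: "1 \<le> j" "j \<le> m" by auto
    show "\<exists>p\<in>upper_half. \<forall>z\<in>upper_half. r j p \<le> r j z"
      by (rule min_attained[OF G rcont[OF j]]) (use rinv j in auto)
  qed
  then obtain P where P: "\<And>j. j \<in> {1..m} \<Longrightarrow> P j \<in> upper_half \<and> (\<forall>z\<in>upper_half. r j (P j) \<le> r j z)"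
    by metis
  define \<mu> where "\<mu> = Min ((\<lambda>j. r j (P j)) ` {1..m})"
  have "\<mu> \<in> (\<lambda>j. r j (P j)) ` {1..m}" unfolding \<mu>_def by (rule Min_in) (use m2 in auto)
  then obtain k0 where k0: "k0 \<in> {1..m}" "\<mu> = r k0 (P k0)" by blast
  have \<mu>le: "\<mu> \<le> r j z" if "j \<in> {1..m}" "z \<in> upper_half" for j z
  proof -
    have "\<mu> \<le> r j (P j)" unfolding \<mu>_def by (rule Min_le) (use that in auto)
    also have "\<dots> \<le> r j z" using P[OF that(1)] that(2) by auto
    finally show ?thesis .
  qed
  have \<mu>1: "\<mu> \<ge> 1"
  proof -
    define p where "p = P k0"
    have pH: "p \<in> upper_half" using P[OF k0(1)] unfolding p_def by auto
    have k0': "1 \<le> k0" "k0 \<le> m" using k0(1) by auto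
    have L0: "Lap (U k0) p \<ge> 0"
      by (rule Ulap_nn[OF k0' pH]) (use \<mu>le k0 p_def in auto)
    define G0 where "G0 = g0 p"
    have G0: "G0 > 0" unfolding G0_def using g0_pos[OF pH] .
    define X where "X = G0 * \<mu>"
    have aX: "a j p \<ge> c j * X" if "j \<le> m" for j
    proof (cases "j = 0")
      case True then show ?thesis using c0 a0nn by simp
    next
      case False
      then have j: "1 \<le> j" "j \<le> m" using that by auto
      have "c j * X = (c j * G0) * \<mu>" unfolding X_def by simp
      also have "\<dots> \<le> (c j * G0) * r j p" using \<mu>le[of j p] j pH cpos[OF j] G0 by (intro mult_left_mono) auto
      also have "\<dots> = a j p" using a_r[OF j pH] unfolding G0_def by simp
      finally show ?thesis .
    qed
    have ak0: "a k0 p = c k0 * X" using a_r[OF k0' pH] k0(2) unfolding X_def G0_def p_def by simp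
    have "X - G0 \<ge> 0"
    proof (cases "k0 < m")
      case True
      have "0 \<le> 2 * a k0 p - a (k0+1) p - a (k0-1) p - G0" using L0 LapU[OF k0' pH] True unfolding G0_def by simp
      moreover have "a (k0+1) p \<ge> c (k0+1) * X" using aX True by simp
      moreover have "a (k0-1) p \<ge> c (k0-1) * X" using aX k0' by simp
      moreover have "2 * (c k0 * X) - c (k0+1) * X - c (k0-1) * X = X"
        by (rule lin_id[OF cid[OF k0'(1)]])
      ultimately show ?thesis using ak0 by linarith
    next
      case False
      then have km: "k0 = m" using k0' by simp
      have "0 \<le> 2 * a m p - 2 * a (m-1) p - G0" using L0 LapU[OF k0' pH] km unfolding G0_def by simp
      moreover have "a (m-1) p \<ge> c (m-1) * X" using aX by simp
      moreover have "2 * (c m * X) - 2 * (c (m-1) * X) = X"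
        by (rule lin_id2[OF cidm])
      moreover have "a m p = c m * X" using ak0 km by simp
      ultimately show ?thesis by linarith
    qed
    then have "G0 * \<mu> \<ge> G0 * 1" unfolding X_def by simp
    then show ?thesis using G0 by (simp add: mult_le_cancel_left_pos)
  qed
  have rge: "r j z \<ge> 1" if "1 \<le> j" "j \<le> m" "z \<in> upper_half" for j z
    using \<mu>le[of j z] \<mu>1 that by auto
  have age: "a j z \<ge> c j * g0 z" if "j \<le> m" "z \<in> upper_half" for j z
  proof (cases "j = 0")
    case True then show ?thesis using c0 a0nn by simp
  next
    case False
    then have j: "1 \<le> j" "j \<le> m" using that by auto
    have "c j * g0 z * 1 \<le> c j * g0 z * r j z" using rge[OF j that(2)] cpos[OF j] g0_pos[OF that(2)]
      by (intro mult_left_mono) auto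
    then show ?thesis using a_r[OF j that(2)] by simp
  qed
  have part1: "\<forall>z\<in>upper_half.
            (\<forall>k. 1 \<le> k \<and> k \<le> m - 1 \<longrightarrow>
               h (k+1) z / h k z \<ge> (real k * real m - (real k)^2 / 2) * g0 z) \<and>
            1 / (h m z)^2 \<ge> (real m)^2 / 2 * g0 z"
  proof (intro ballI conjI allI impI)
    fix z k assume z: "z \<in> upper_half" and k: "1 \<le> k \<and> k \<le> m - 1"
    then have "h (k+1) z / h k z = a k z" using alt[of k z] by auto
    then show "h (k+1) z / h k z \<ge> (real k * real m - (real k)^2 / 2) * g0 z"
      using age[of k z] k z unfolding c_def by auto
  next
    fix z assume z: "z \<in> upper_half"
    show "1 / (h m z)^2 \<ge> (real m)^2 / 2 * g0 z" using age[of m z] z am[of z] cm by simp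
  qed
  have part2: "\<forall>z\<in>upper_half. q z = 0" if ex: "\<exists>z\<in>upper_half.
            (\<exists>k. 1 \<le> k \<and> k \<le> m - 1 \<and>
               h (k+1) z / h k z = (real k * real m - (real k)^2 / 2) * g0 z) \<or>
            1 / (h m z)^2 = (real m)^2 / 2 * g0 z"
  proof -
    obtain z0 k where z0: "z0 \<in> upper_half" and k: "1 \<le> k" "k \<le> m" and eqk0: "a k z0 = c k * g0 z0"
    proof -
      obtain z0 where z0: "z0 \<in> upper_half" and
        d: "(\<exists>k. 1 \<le> k \<and> k \<le> m - 1 \<and> h (k+1) z0 / h k z0 = (real k * real m - (real k)^2 / 2) * g0 z0) \<or>
            1 / (h m z0)^2 = (real m)^2 / 2 * g0 z0" using ex by blast
      from d show ?thesis
      proof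
        assume "\<exists>k. 1 \<le> k \<and> k \<le> m - 1 \<and> h (k+1) z0 / h k z0 = (real k * real m - (real k)^2 / 2) * g0 z0"
        then obtain k where k: "1 \<le> k" "k \<le> m - 1" "h (k+1) z0 / h k z0 = (real k * real m - (real k)^2 / 2) * g0 z0" by blast
        have "a k z0 = c k * g0 z0" using alt[of k z0] k unfolding c_def by simp
        then show ?thesis using that[OF z0, of k] k by simp
      next
        assume "1 / (h m z0)^2 = (real m)^2 / 2 * g0 z0"
        then have "a m z0 = c m * g0 z0" unfolding am cm by simp
        then show ?thesis using that[OF z0, of m] m2 by simp
      qed
    qed
    have Uk0: "U k z0 = 0" using U_r[OF k z0] r1_iff[OF k z0] eqk0 by simp
    have Unn: "U k z \<ge> 0" if "z \<in> upper_half" for z using U_r[OF k that] rge[OF k that] by simp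
    have Acont: "continuous_on upper_half (\<lambda>z. 2 * a k z)" by (intro continuous_intros acont k)
    have LB: "Lap (U k) z \<le> 2 * a k z * U k z" if z: "z \<in> upper_half" for z
    proof -
      have "Lap (U k) z \<le> 2 * a k z - 2 * (c k * g0 z)"
      proof (cases "k < m")
        case True
        have "Lap (U k) z = 2 * a k z - a (k+1) z - a (k-1) z - g0 z" using LapU[OF k z] True by simp
        moreover have "a (k+1) z \<ge> c (k+1) * g0 z" using age[of "k+1" z] True z by simp
        moreover have "a (k-1) z \<ge> c (k-1) * g0 z" using age[of "k-1" z] k z by simp
        moreover have "2 * (c k * g0 z) - c (k+1) * g0 z - c (k-1) * g0 z = g0 z"
          by (rule lin_id[OF cid[OF k(1)]])
        ultimately show ?thesis by linarith
      next
        case False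
        then have km: "k = m" using k by simp
        have "Lap (U m) z = 2 * a m z - 2 * a (m-1) z - g0 z" using LapU[OF k z] km by simp
        moreover have "a (m-1) z \<ge> c (m-1) * g0 z" using age[of "m-1" z] z by simp
        moreover have "2 * (c m * g0 z) - 2 * (c (m-1) * g0 z) = g0 z"
          by (rule lin_id2[OF cidm])
        ultimately show ?thesis unfolding km by linarith
      qed
      also have "\<dots> \<le> 2 * a k z * U k z"
      proof -
        define R where "R = r k z"
        have R: "R > 0" unfolding R_def using rpos[OF k z] .
        have "ln (1 / R) \<le> 1 / R - 1" using ln_le_minus_one[of "1/R"] R by simp
        then have "- ln R \<le> 1 / R - 1" using R by (simp add: ln_div)
        then have "R * (- ln R) \<le> R * (1 / R - 1)" using R by (intro mult_left_mono) auto
        then have "R - 1 \<le> R * ln R" using R by (simp add: algebra_simps)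
        moreover have "c k * g0 z > 0" using cpos[OF k] g0_pos[OF z] by simp
        ultimately have "(c k * g0 z) * (R - 1) \<le> (c k * g0 z) * (R * ln R)" by (intro mult_left_mono) auto
        moreover have "a k z = c k * g0 z * R" unfolding R_def using a_r[OF k z] .
        moreover have "U k z = ln R" unfolding R_def using U_r[OF k z] .
        ultimately show ?thesis by (simp add: algebra_simps)
      qed
      finally show ?thesis .
    qed
    have U0: "\<forall>z\<in>upper_half. U k z = 0"
      by (rule strong_min[OF open_H connected_H UC[OF k] Unn Acont LB z0 Uk0])
    have rk1: "r k z = 1" if z: "z \<in> upper_half" for z
      using U0 z U_r[OF k z] rpos[OF k z] by (simp add: ln_eq_zero_iff)
    show ?thesis
    proof
      fix z assume z: "z \<in> upper_half"
      have step: "1 \<le> j \<longrightarrow> j \<le> m \<longrightarrow> r j z = 1 \<longrightarrow> q z = 0" for j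
      proof (induction j)
        case 0 then show ?case by simp
      next
        case (Suc i)
        show ?case
        proof (intro impI)
          assume j1: "1 \<le> Suc i" and jm: "Suc i \<le> m" and rj: "r (Suc i) z = 1"
          have j: "1 \<le> Suc i" "Suc i \<le> m" using j1 jm by auto
          have Lnn: "Lap (U (Suc i)) z \<ge> 0"
            by (rule Ulap_nn[OF j z]) (use rge[OF j] rj in auto)
          have aj: "a (Suc i) z = c (Suc i) * g0 z" using r1_iff[OF j z] rj by simp
          show "q z = 0"
          proof (cases "i = 0")
            case True
            have "Lap (U 1) z = 2 * a 1 z - a 2 z - a 0 z - g0 z" using LapU[of 1 z] m2 z by (simp add: numeral_2_eq_2)
            moreover have "a 2 z \<ge> c 2 * g0 z" using age[of 2 z] m2 z by simp
            moreover have "2 * (c 1 * g0 z) - c 2 * g0 z - c 0 * g0 z = g0 z"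
            proof -
              have "2 * c 1 - c 2 - c 0 = 1" using cid[of 1] by (simp add: numeral_2_eq_2)
              then show ?thesis by (rule lin_id)
            qed
            moreover have "a 1 z = c 1 * g0 z" using aj True by simp
            ultimately have "a 0 z \<le> 0" using Lnn True c0 by simp
            then have "(h 1 z)^2 * (cmod (q z))^2 \<le> 0" using a0 by simp
            moreover have "h 1 z > 0" using h_pos[of 1 z] z m2 by simp
            ultimately have "(cmod (q z))^2 \<le> 0" by (auto simp: mult_le_0_iff)
            then show ?thesis by simp
          next
            case False
            then have i: "1 \<le> i" "i \<le> m" using j by auto
            have "a i z \<le> c i * g0 z"
            proof (cases "Suc i < m")
              case True
              have "Lap (U (Suc i)) z = 2 * a (Suc i) z - a (Suc (Suc i)) z - a i z - g0 z"
                using LapU[OF j z] True by simp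
              moreover have "a (Suc (Suc i)) z \<ge> c (Suc (Suc i)) * g0 z" using age[of "Suc (Suc i)" z] True z by simp
              moreover have "2 * (c (Suc i) * g0 z) - c (Suc (Suc i)) * g0 z - c i * g0 z = g0 z"
                using lin_id[OF cid[of "Suc i"]] by simp
              ultimately show ?thesis using Lnn aj by linarith
            next
              case False
              then have sm: "Suc i = m" using j by simp
              have "Lap (U m) z = 2 * a m z - 2 * a (m-1) z - g0 z" using LapU[of m z] m2 z by simp
              moreover have "m - 1 = i" using sm by simp
              moreover have "2 * (c m * g0 z) - 2 * (c (m-1) * g0 z) = g0 z"
                by (rule lin_id2[OF cidm])
              moreover have "a m z = c m * g0 z" using aj sm by simp
              moreover have "Lap (U m) z \<ge> 0" using Lnn sm by simp
              ultimately have "a (m-1) z \<le> c (m-1) * g0 z" by linarith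
              then show ?thesis using \<open>m - 1 = i\<close> by simp
            qed
            then have "r i z = 1" using age[of i z] i z r1_iff[OF i z] by simp
            then show ?thesis using Suc.IH i by simp
          qed
        qed
      qed
      show "q z = 0" using step[of k] k rk1[OF z] by simp
    qed
  qed
  show ?thesis using part1 part2 by blast
qed

end
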